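(* Let $\eta=\frac{1+\sqrt5}{2}$ and $N=\mathbf{Z}[\eta]=\mathbf{Z}e_1\oplus\mathbf{Z}e_2$ with $e_1=1$, $e_2=\eta$. Let $b:N\times N\to\mathbf{Z}$ be a symmetric bilinear form such that $(N,b)$ is an even hyperbolic lattice and multiplication by $\eta^2$ is an isometry of $(N,b)$. Then: \begin{enumerate} \item The Gram matrix of $b$ with respect to $(e_1,e_2)$ has the form $\begin{pmatrix}2q&q\\ q&-2q\end{pmatrix}$ for some nonzero integer $q$. Conversely, for every nonzero integer $q$ this matrix defines an even hyperbolic lattice on $N$ for which multiplication by $\eta^2$ is an isometry. \item With $q$ as in (1), the discriminant group satisfies $N^*/N=\langle e_2/q\rangle\oplus\langle (e_1-2e_2)/(5q)\rangle\simeq \mathbf{Z}/q\mathbf{Z}\oplus\mathbf{Z}/5q\mathbf{Z}$. \item With $q$ as in (1), there is no $x\in N$ with $b(x,x)=0$. Moreover, there is no $x\in N$ with $b(x,x)=\pm2$ if and only if $q\neq\pm1$. \item With $q$ as in (1), multiplication by $\eta^6$ acts on $N^*/N$ as $-\mathrm{id}_{N^*/N}$ if and only if $q\in\{\pm1,\pm2\}$. \end{enumerate}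
   Context: A pair $(N,b)$, with $b$ a $\mathbf{Z}$-valued symmetric bilinear form on $N\cong\mathbf{Z}^2$, is an even hyperbolic lattice if $b(x,x)$ is even for all $x$ (equivalently, the diagonal entries of the Gram matrix are even) and the Gram matrix has signature $(1,1)$. In this case $b$ induces an embedding $N\subset N^*:=\mathrm{Hom}_{\mathbf{Z}}(N,\mathbf{Z})\subset N\otimes\mathbf{Q}$, and $N^*/N$ is called the discriminant group. A $\mathbf{Z}$-module automorphism $f$ of $N$ is an isometry if $b(f(x),f(y))=b(x,y)$ for all $x,y$. An isometry induces an automorphism of $N^*/N$ via its $\mathbf{Q}$-linear extension. Multiplication by $\eta^k$ is the $\mathbf{Z}$-module automorphism $p(\eta)\mapsto\eta^kp(\eta)$ of $N$. *)

theory Defs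
  imports Complex_Main
begin

text \<open>The lattice N = Z[eta] = Z e1 + Z e2 with e1 = 1, e2 = eta is modelled by coordinates:
  the pair (a, b) stands for a + b * eta.  N tensor Q is modelled by pairs of rationals,
  N tensor R by pairs of reals.\<close>

type_synonym lat = "int \<times> int"

definition eta :: real where "eta = (1 + sqrt 5) / 2"

definition emb :: "lat \<Rightarrow> real" where
  "emb x = real_of_int (fst x) + real_of_int (snd x) * eta"

definition e1 :: lat where "e1 = (1, 0)"
definition e2 :: lat where "e2 = (0, 1)"

text \<open>Multiplication by eta in coordinates: eta (a + b eta) = b + (a+b) eta, since eta^2 = eta + 1.\<close>
definition eta_mul :: "lat \<Rightarrow> lat" where
  "eta_mul x = (snd x, fst x + snd x)"

lemma eta_sq: "eta * eta = eta + 1"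
  unfolding eta_def by (simp add: field_simps)

lemma emb_eta_mul: "emb (eta_mul x) = eta * emb x"
  unfolding emb_def eta_mul_def by (simp add: algebra_simps mult.assoc[symmetric] eta_sq)

definition eta_mulQ :: "rat \<times> rat \<Rightarrow> rat \<times> rat" where
  "eta_mulQ y = (snd y, fst y + snd y)"

definition ofN :: "lat \<Rightarrow> rat \<times> rat" where
  "ofN x = (of_int (fst x), of_int (snd x))"

definition smul :: "int \<Rightarrow> lat \<Rightarrow> lat" where
  "smul k x = (k * fst x, k * snd x)"

definition addL :: "lat \<Rightarrow> lat \<Rightarrow> lat" where
  "addL x y = (fst x + fst y, snd x + snd y)"

definition addQ :: "rat \<times> rat \<Rightarrow> rat \<times> rat \<Rightarrow> rat \<times> rat" where
  "addQ x y = (fst x + fst y, snd x + snd y)"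

definition smulQ :: "int \<Rightarrow> rat \<times> rat \<Rightarrow> rat \<times> rat" where
  "smulQ k y = (of_int k * fst y, of_int k * snd y)"

definition symmetric_bilinear :: "(lat \<Rightarrow> lat \<Rightarrow> int) \<Rightarrow> bool" where
  "symmetric_bilinear B \<longleftrightarrow>
     (\<forall>x y z. B (addL x y) z = B x z + B y z) \<and>
     (\<forall>k x y. B (smul k x) y = k * B x y) \<and>
     (\<forall>x y. B x y = B y x)"

definition extR :: "(lat \<Rightarrow> lat \<Rightarrow> int) \<Rightarrow> real \<times> real \<Rightarrow> real \<times> real \<Rightarrow> real" where
  "extR B u v =
     fst u * fst v * of_int (B e1 e1) + fst u * snd v * of_int (B e1 e2)
   + snd u * fst v * of_int (B e2 e1) + snd u * snd v * of_int (B e2 e2)"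

definition extQ :: "(lat \<Rightarrow> lat \<Rightarrow> int) \<Rightarrow> rat \<times> rat \<Rightarrow> rat \<times> rat \<Rightarrow> rat" where
  "extQ B u v =
     fst u * fst v * of_int (B e1 e1) + fst u * snd v * of_int (B e1 e2)
   + snd u * fst v * of_int (B e2 e1) + snd u * snd v * of_int (B e2 e2)"

text \<open>Signature (1,1): over R the form is diagonalised by a basis (u, v) with
  b(u,u) > 0 and b(v,v) < 0 (Sylvester).\<close>
definition signature_1_1 :: "(lat \<Rightarrow> lat \<Rightarrow> int) \<Rightarrow> bool" where
  "signature_1_1 B \<longleftrightarrow>
     (\<exists>u v. fst u * snd v - snd u * fst v \<noteq> 0 \<and>
            extR B u u > 0 \<and> extR B v v < 0 \<and> extR B u v = 0)"

definition even_hyperbolic :: "(lat \<Rightarrow> lat \<Rightarrow> int) \<Rightarrow> bool" where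
  "even_hyperbolic B \<longleftrightarrow> symmetric_bilinear B \<and> (\<forall>x. even (B x x)) \<and> signature_1_1 B"

definition isometry :: "(lat \<Rightarrow> lat \<Rightarrow> int) \<Rightarrow> (lat \<Rightarrow> lat) \<Rightarrow> bool" where
  "isometry B f \<longleftrightarrow>
     (\<forall>x y. f (addL x y) = addL (f x) (f y)) \<and> (\<forall>k x. f (smul k x) = smul k (f x)) \<and>
     bij f \<and> (\<forall>x y. B (f x) (f y) = B x y)"

definition dual :: "(lat \<Rightarrow> lat \<Rightarrow> int) \<Rightarrow> (rat \<times> rat) set" where
  "dual B = {y. \<forall>x. extQ B y (ofN x) \<in> \<int>}"

definition inN :: "rat \<times> rat \<Rightarrow> bool" where
  "inN y \<longleftrightarrow> y \<in> range ofN"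

definition gram_form :: "int \<Rightarrow> lat \<Rightarrow> lat \<Rightarrow> int" where
  "gram_form q x y =
     2*q * fst x * fst y + q * (fst x * snd y + snd x * fst y) - 2*q * snd x * snd y"

end

theory Submission imports Defs "HOL-Computational_Algebra.Primes" begin

lemma no_sq5: "(s::int)^2 = 5*t^2 \<Longrightarrow> t = 0"
proof (induction "nat \<bar>t\<bar>" arbitrary: t s rule: less_induct)
  case less
  have h: "s^2 = 5*t^2" by fact
  have "prime (5::int)" by simp
  moreover have "(5::int) dvd s^2" using h by simp
  ultimately have "5 dvd s" using prime_dvd_power by blast
  then obtain s' where s': "s = 5*s'" by auto
  have h2: "t^2 = 5*s'^2" using h s' by (simp add: power2_eq_square)
  show "t = 0"
  proof (cases "s' = 0")
    case True thus ?thesis using h2 by simp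
  next
    case False
    have "s'^2 < t^2" using h2 False by simp
    hence "\<bar>s'\<bar> < \<bar>t\<bar>" by (metis abs_le_square_iff not_less)
    hence "nat \<bar>s'\<bar> < nat \<bar>t\<bar>" by simp
    from less(1)[OF this h2] show ?thesis using h2 by simp
  qed
qed

lemma norm_nz: "(x1::int)^2 + x1*x2 - x2^2 = 0 \<Longrightarrow> x1 = 0 \<and> x2 = 0"
proof -
  assume h: "x1^2 + x1*x2 - x2^2 = 0"
  have "(2*x1+x2)^2 = 5*x2^2" using h by (simp add: power2_eq_square algebra_simps)
  hence "x2 = 0" by (rule no_sq5)
  thus ?thesis using h by simp
qed

lemma f2: "(eta_mul ^^ 2) x = (fst x + snd x, fst x + 2*snd x)"
  by (simp add: eta_mul_def numeral_2_eq_2)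

lemma f6: "(eta_mulQ ^^ 6) y = (5*fst y + 8*snd y, 8*fst y + 13*snd y)"
  by (simp add: eta_mulQ_def eval_nat_numeral)

lemma lin1: "symmetric_bilinear B \<Longrightarrow> B x z = fst x * B e1 z + snd x * B e2 z"
proof -
  assume sb: "symmetric_bilinear B"
  have "x = addL (smul (fst x) e1) (smul (snd x) e2)" by (simp add: addL_def smul_def e1_def e2_def)
  hence "B x z = B (addL (smul (fst x) e1) (smul (snd x) e2)) z" by simp
  also have "\<dots> = B (smul (fst x) e1) z + B (smul (snd x) e2) z"
    using sb unfolding symmetric_bilinear_def by blast
  also have "\<dots> = fst x * B e1 z + snd x * B e2 z"
    using sb unfolding symmetric_bilinear_def by metis
  finally show ?thesis .
qed

lemma expand: "symmetric_bilinear B \<Longrightarrow> B x y = fst x * (fst y * B e1 e1 + snd y * B e1 e2) + snd x * (fst y * B e1 e2 + snd y * B e2 e2)"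
proof -
  assume sb: "symmetric_bilinear B"
  have sym: "\<And>a b. B a b = B b a" using sb unfolding symmetric_bilinear_def by blast
  have "B x y = fst x * B e1 y + snd x * B e2 y" by (rule lin1[OF sb])
  also have "B e1 y = fst y * B e1 e1 + snd y * B e2 e1" using lin1[OF sb, of y e1] sym by metis
  also have "B e2 y = fst y * B e1 e2 + snd y * B e2 e2" using lin1[OF sb, of y e2] sym by metis
  finally show ?thesis using sym[of e2 e1] by simp
qed

lemma inN_iff: "inN y \<longleftrightarrow> fst y \<in> \<int> \<and> snd y \<in> \<int>"
  unfolding inN_def ofN_def
proof
  assume "y \<in> range (\<lambda>x. (of_int (fst x), of_int (snd x)))"
  thus "fst y \<in> \<int> \<and> snd y \<in> \<int>" by auto
next
  assume "fst y \<in> \<int> \<and> snd y \<in> \<int>"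
  then obtain a b where "fst y = of_int a" "snd y = of_int b" by (auto elim!: Ints_cases)
  hence "y = (\<lambda>x. (of_int (fst x), of_int (snd x))) (a,b)" by (cases y) simp
  thus "y \<in> range (\<lambda>x. (of_int (fst x), of_int (snd x)))" by blast
qed

lemma div_Ints: "(d::int) \<noteq> 0 \<Longrightarrow> (of_int n / of_int d :: rat) \<in> \<int> \<longleftrightarrow> d dvd n"
proof
  assume d: "d \<noteq> 0" and "(of_int n / of_int d :: rat) \<in> \<int>"
  then obtain k where "(of_int n / of_int d :: rat) = of_int k" by (auto elim: Ints_cases)
  hence "(of_int n :: rat) = of_int (d*k)" using d by (simp add: field_simps)
  hence "n = d*k" by (simp only: of_int_eq_iff)
  thus "d dvd n" by simp
next
  assume d: "d \<noteq> 0" and "d dvd n"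
  then obtain k where "n = d*k" by auto
  thus "(of_int n / of_int d :: rat) \<in> \<int>" using d by simp
qed


lemma extQ_g: "extQ (gram_form q) y (ofN x) =
   of_int (fst x) * (2*of_int q * fst y + of_int q * snd y) + of_int (snd x) * (of_int q * fst y - 2*of_int q * snd y)"
  unfolding extQ_def gram_form_def ofN_def e1_def e2_def by (simp add: algebra_simps)

lemma dual_g: "y \<in> dual (gram_form q) \<longleftrightarrow>
   (2*of_int q * fst y + of_int q * snd y) \<in> \<int> \<and> (of_int q * fst y - 2*of_int q * snd y) \<in> \<int>"
proof
  assume "y \<in> dual (gram_form q)"
  hence h: "\<And>x. extQ (gram_form q) y (ofN x) \<in> \<int>" unfolding dual_def by blast
  show "(2*of_int q * fst y + of_int q * snd y) \<in> \<int> \<and> (of_int q * fst y - 2*of_int q * snd y) \<in> \<int>"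
    using h[of "(1,0)"] h[of "(0,1)"] unfolding extQ_g by simp
next
  assume "(2*of_int q * fst y + of_int q * snd y) \<in> \<int> \<and> (of_int q * fst y - 2*of_int q * snd y) \<in> \<int>"
  thus "y \<in> dual (gram_form q)" unfolding dual_def extQ_g
    by (auto intro!: Ints_add Ints_mult)
qed

lemma gprops:
  fixes q :: int
  assumes q: "q \<noteq> 0"
  defines "B \<equiv> gram_form q"
  shows "(let u = (0::rat, 1 / of_int q);
              v = (1 / (5 * of_int q), -2 / (5 * of_int q))
          in u \<in> dual B \<and> v \<in> dual B \<and>
             (\<forall>y \<in> dual B. \<exists>m n. inN (addQ y (addQ (smulQ m u) (smulQ n v)))) \<and>
             (\<forall>m n. inN (addQ (smulQ m u) (smulQ n v)) \<longleftrightarrow> q dvd m \<and> (5*q) dvd n)) \<and>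
         (\<not> (\<exists>x. x \<noteq> (0,0) \<and> B x x = 0)) \<and>
         ((\<not> (\<exists>x. B x x = 2 \<or> B x x = -2)) \<longleftrightarrow> q \<noteq> 1 \<and> q \<noteq> -1) \<and>
         ((\<forall>y \<in> dual B. inN (addQ ((eta_mulQ ^^ 6) y) y)) \<longleftrightarrow> q \<in> {1, -1, 2, -2})"
proof -
  have qr: "(of_int q :: rat) \<noteq> 0" using q by simp
  have Bxx: "\<And>x. B x x = 2*q*((fst x)^2 + fst x * snd x - (snd x)^2)"
    unfolding B_def gram_form_def by (simp add: algebra_simps power2_eq_square)
  define u where "u = (0::rat, 1 / of_int q :: rat)"
  define v where "v = (1 / (5 * of_int q) :: rat, -2 / (5 * of_int q) :: rat)"
  have uD: "u \<in> dual B" unfolding B_def dual_g u_def using qr by simp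
  have vD: "v \<in> dual B" unfolding B_def dual_g v_def using qr by (simp add: field_simps)
  have gen: "\<forall>y \<in> dual B. \<exists>m n. inN (addQ y (addQ (smulQ m u) (smulQ n v)))"
  proof
    fix y assume "y \<in> dual B"
    then obtain A C where A: "2*of_int q * fst y + of_int q * snd y = of_int A"
       and C: "of_int q * fst y - 2*of_int q * snd y = of_int C"
      unfolding B_def dual_g by (auto elim!: Ints_cases)
    have e1: "fst y = (of_int C + 2*of_int A) / (5*of_int q)" using A C qr by (simp add: field_simps)
    have e2: "snd y = of_int A / of_int q - 2*(of_int C + 2*of_int A) / (5*of_int q)" using A C qr by (simp add: field_simps)
    have "addQ y (addQ (smulQ (-A) u) (smulQ (-(C+2*A)) v)) = (0,0)"
      unfolding addQ_def smulQ_def u_def v_def using e1 e2 qr by (simp add: field_simps)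
    moreover have "inN (0,0)" unfolding inN_iff by simp
    ultimately show "\<exists>m n. inN (addQ y (addQ (smulQ m u) (smulQ n v)))" by metis
  qed
  have quot: "\<forall>m n. inN (addQ (smulQ m u) (smulQ n v)) \<longleftrightarrow> q dvd m \<and> (5*q) dvd n"
  proof (intro allI)
    fix m n :: int
    have f: "fst (addQ (smulQ m u) (smulQ n v)) = of_int n / of_int (5*q)"
      unfolding addQ_def smulQ_def u_def v_def by simp
    have s: "snd (addQ (smulQ m u) (smulQ n v)) = of_int m / of_int q - 2 * (of_int n / of_int (5*q))"
      unfolding addQ_def smulQ_def u_def v_def by simp
    show "inN (addQ (smulQ m u) (smulQ n v)) \<longleftrightarrow> q dvd m \<and> (5*q) dvd n"
    proof
      assume "inN (addQ (smulQ m u) (smulQ n v))"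
      hence h1: "of_int n / of_int (5*q) \<in> (\<int>::rat set)" and
            h2: "of_int m / of_int q - 2 * (of_int n / of_int (5*q)) \<in> (\<int>::rat set)"
        unfolding inN_iff f s by auto
      have "(of_int m / of_int q :: rat) = (of_int m / of_int q - 2 * (of_int n / of_int (5*q))) + 2 * (of_int n / of_int (5*q))" by simp
      also have "\<dots> \<in> \<int>" using h1 h2 by (intro Ints_add Ints_mult) auto
      finally have "q dvd m" using div_Ints[OF q] by blast
      moreover have "5*q dvd n" using h1 div_Ints[of "5*q" n] q by simp
      ultimately show "q dvd m \<and> (5*q) dvd n" ..
    next
      assume "q dvd m \<and> (5*q) dvd n"
      hence h1: "of_int n / of_int (5*q) \<in> (\<int>::rat set)" and h2: "(of_int m / of_int q :: rat) \<in> \<int>"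
        using div_Ints[of "5*q" n] div_Ints[OF q, of m] q by auto
      show "inN (addQ (smulQ m u) (smulQ n v))"
        unfolding inN_iff f s using h1 h2 Ints_mult[OF _ h1, of 2] by (auto intro!: Ints_diff)
    qed
  qed
  have iso: "\<not> (\<exists>x. x \<noteq> (0,0) \<and> B x x = 0)"
  proof
    assume "\<exists>x. x \<noteq> (0,0) \<and> B x x = 0"
    then obtain x where x: "x \<noteq> (0,0)" "B x x = 0" by blast
    hence "(fst x)^2 + fst x * snd x - (snd x)^2 = 0" using Bxx[of x] q by simp
    hence "fst x = 0 \<and> snd x = 0" by (rule norm_nz)
    thus False using x by (cases x) simp
  qed
  have two: "(\<not> (\<exists>x. B x x = 2 \<or> B x x = -2)) \<longleftrightarrow> q \<noteq> 1 \<and> q \<noteq> -1"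
  proof
    assume h: "\<not> (\<exists>x. B x x = 2 \<or> B x x = -2)"
    have "B (1,0) (1,0) = 2*q" using Bxx[of "(1,0)"] by simp
    thus "q \<noteq> 1 \<and> q \<noteq> -1" using h by auto
  next
    assume h: "q \<noteq> 1 \<and> q \<noteq> -1"
    show "\<not> (\<exists>x. B x x = 2 \<or> B x x = -2)"
    proof
      assume "\<exists>x. B x x = 2 \<or> B x x = -2"
      then obtain x where "B x x = 2 \<or> B x x = -2" by blast
      hence "q * ((fst x)^2 + fst x * snd x - (snd x)^2) = 1 \<or> q * ((fst x)^2 + fst x * snd x - (snd x)^2) = -1"
        using Bxx[of x] by auto
      hence "q dvd 1" by (metis dvd_minus_iff dvd_triv_left)
      hence "\<bar>q\<bar> = 1" by simp
      thus False using h by auto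
    qed
  qed
  have six: "(\<forall>y \<in> dual B. inN (addQ ((eta_mulQ ^^ 6) y) y)) \<longleftrightarrow> q \<in> {1, -1, 2, -2}"
  proof
    assume h: "\<forall>y \<in> dual B. inN (addQ ((eta_mulQ ^^ 6) y) y)"
    have "inN (addQ ((eta_mulQ ^^ 6) u) u)" using h uD by blast
    hence "(of_int 8 / of_int q :: rat) \<in> \<int>" "(of_int 14 / of_int q :: rat) \<in> \<int>"
      unfolding inN_iff f6 addQ_def u_def by (simp_all add: field_simps)
    hence q8: "q dvd 8" and q14: "q dvd 14" using div_Ints[OF q] by blast+
    from q14 q8 have "q dvd 14 - 8" by (rule dvd_diff)
    hence "q dvd 6" by simp
    hence "q dvd 8 - 6" using \<open>q dvd 8\<close> by (intro dvd_diff)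
    hence "q dvd 2" by simp
    hence "\<bar>q\<bar> \<le> 2" using dvd_imp_le_int[of 2 q] by simp
    thus "q \<in> {1, -1, 2, -2}" using q by auto
  next
    assume "q \<in> {1, -1, 2, -2}"
    hence "q dvd 2" by auto
    then obtain r where r: "2 = q*r" by blast
    show "\<forall>y \<in> dual B. inN (addQ ((eta_mulQ ^^ 6) y) y)"
    proof
      fix y assume "y \<in> dual B"
      then obtain A C where A: "2*of_int q * fst y + of_int q * snd y = of_int A"
         and C: "of_int q * fst y - 2*of_int q * snd y = of_int C"
        unfolding B_def dual_g by (auto elim!: Ints_cases)
      have rr: "(2::rat) = of_int q * of_int r" using r by (metis of_int_mult of_int_numeral)
      have "of_int q * (6 * fst y + 8 * snd y) = 2 * (2*of_int A - of_int C)"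
        unfolding A[symmetric] C[symmetric] by (simp add: algebra_simps)
      also have "\<dots> = of_int q * (of_int r * (2*of_int A - of_int C))" unfolding rr by simp
      finally have "of_int q * (6 * fst y + 8 * snd y) = of_int q * (of_int r * (2*of_int A - of_int C))" .
      hence x1: "6 * fst y + 8 * snd y = of_int (r * (2*A - C))" using qr by simp
      have "of_int q * (8 * fst y + 14 * snd y) = 2 * (3*of_int A - 2*of_int C)"
        unfolding A[symmetric] C[symmetric] by (simp add: algebra_simps)
      also have "\<dots> = of_int q * (of_int r * (3*of_int A - 2*of_int C))" unfolding rr by simp
      finally have "of_int q * (8 * fst y + 14 * snd y) = of_int q * (of_int r * (3*of_int A - 2*of_int C))" .
      hence x2: "8 * fst y + 14 * snd y = of_int (r * (3*A - 2*C))" using qr by simp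
      show "inN (addQ ((eta_mulQ ^^ 6) y) y)"
      proof -
        have "fst ((eta_mulQ ^^ 6) y) + fst y = 6 * fst y + 8 * snd y" unfolding f6 by simp
        moreover have "snd ((eta_mulQ ^^ 6) y) + snd y = 8 * fst y + 14 * snd y" unfolding f6 by simp
        ultimately show ?thesis unfolding inN_iff addQ_def using x1 x2 by simp
      qed
    qed
  qed
  show ?thesis using uD vD gen quot iso two six unfolding u_def v_def Let_def by blast
qed


lemma gram_eh: "q \<noteq> 0 \<Longrightarrow> even_hyperbolic (gram_form q) \<and> isometry (gram_form q) (eta_mul ^^ 2)"
proof -
  assume q: "q \<noteq> 0"
  have sb: "symmetric_bilinear (gram_form q)"
    unfolding symmetric_bilinear_def gram_form_def addL_def smul_def by (simp add: algebra_simps)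
  have ev: "\<forall>x. even (gram_form q x x)"
  proof
    fix x
    have "gram_form q x x = 2 * (q * (fst x * fst x) + q * (fst x * snd x) - q * (snd x * snd x))"
      unfolding gram_form_def by (simp add: algebra_simps)
    thus "even (gram_form q x x)" by simp
  qed
  have sig: "signature_1_1 (gram_form q)"
  proof (cases "q > 0")
    case True
    show ?thesis unfolding signature_1_1_def
      by (rule exI[of _ "(1,0)"], rule exI[of _ "(1,-2)"])
         (simp add: extR_def gram_form_def e1_def e2_def True)
  next
    case False
    hence "q < 0" using q by simp
    thus ?thesis unfolding signature_1_1_def
      by (intro exI[of _ "(1,-2)"] exI[of _ "(1,0)"])
         (simp add: extR_def gram_form_def e1_def e2_def)
  qed
  have bj: "bij (eta_mul ^^ 2)"
  proof (rule o_bij[of "\<lambda>x. (2*fst x - snd x, snd x - fst x)"])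
    show "(\<lambda>x. (2*fst x - snd x, snd x - fst x)) \<circ> (eta_mul ^^ 2) = id"
      by (rule ext) (simp add: f2)
    show "(eta_mul ^^ 2) \<circ> (\<lambda>x. (2*fst x - snd x, snd x - fst x)) = id"
      by (rule ext) (simp add: f2)
  qed
  have iso: "isometry (gram_form q) (eta_mul ^^ 2)"
    unfolding isometry_def using bj
    by (simp add: f2 addL_def smul_def gram_form_def algebra_simps)
  show ?thesis using sb ev sig iso unfolding even_hyperbolic_def by blast
qed

theorem proposition3p3:
  shows "(\<forall>B. even_hyperbolic B \<and> isometry B (eta_mul ^^ 2) \<longrightarrow>
      (\<exists>q::int. q \<noteq> 0 \<and>
         \<comment> \<open>(1) Gram matrix\<close>
         B e1 e1 = 2*q \<and> B e1 e2 = q \<and> B e2 e1 = q \<and> B e2 e2 = -2*q \<and>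
         \<comment> \<open>(2) N^*/N = <e2/q> (+) <(e1-2e2)/(5q)> = Z/q (+) Z/5q\<close>
         (let u = (0::rat, 1 / of_int q);
              v = (1 / (5 * of_int q), -2 / (5 * of_int q))
          in u \<in> dual B \<and> v \<in> dual B \<and>
             (\<forall>y \<in> dual B. \<exists>m n. inN (addQ y (addQ (smulQ m u) (smulQ n v)))) \<and>
             (\<forall>m n. inN (addQ (smulQ m u) (smulQ n v)) \<longleftrightarrow> q dvd m \<and> (5*q) dvd n)) \<and>
         \<comment> \<open>(3) isotropic and (-2)/(2)-vectors\<close>
         (\<not> (\<exists>x. x \<noteq> (0,0) \<and> B x x = 0)) \<and>
         ((\<not> (\<exists>x. B x x = 2 \<or> B x x = -2)) \<longleftrightarrow> q \<noteq> 1 \<and> q \<noteq> -1) \<and>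
         \<comment> \<open>(4) eta^6 acts as -id on N^*/N\<close>
         ((\<forall>y \<in> dual B. inN (addQ ((eta_mulQ ^^ 6) y) y)) \<longleftrightarrow> q \<in> {1, -1, 2, -2}))) \<and>
    (\<forall>q::int. q \<noteq> 0 \<longrightarrow>
       gram_form q e1 e1 = 2*q \<and> gram_form q e1 e2 = q \<and> gram_form q e2 e1 = q \<and>
       gram_form q e2 e2 = -2*q \<and>
       even_hyperbolic (gram_form q) \<and> isometry (gram_form q) (eta_mul ^^ 2))"
  proof (intro conjI allI impI)
  fix q :: int assume q: "q \<noteq> 0"
  show "gram_form q e1 e1 = 2*q" "gram_form q e1 e2 = q" "gram_form q e2 e1 = q"
       "gram_form q e2 e2 = -2*q" by (simp_all add: gram_form_def e1_def e2_def)
  show "even_hyperbolic (gram_form q)" "isometry (gram_form q) (eta_mul ^^ 2)" using gram_eh[OF q] by blast+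
next
  fix B assume h: "even_hyperbolic B \<and> isometry B (eta_mul ^^ 2)"
  have sb: "symmetric_bilinear B" using h unfolding even_hyperbolic_def by blast
  have sym: "B e2 e1 = B e1 e2" using sb unfolding symmetric_bilinear_def by blast
  have pres: "\<And>x y. B ((eta_mul ^^ 2) x) ((eta_mul ^^ 2) y) = B x y" using h unfolding isometry_def by blast
  define q where "q = B e1 e2"
  have i1: "B (1,1) (1,1) = B e1 e1" using pres[of e1 e1] by (simp add: f2 e1_def)
  have i2: "B (1,1) (1,2) = B e1 e2" using pres[of e1 e2] by (simp add: f2 e1_def e2_def)
  have a1: "B e1 e1 + 2*B e1 e2 + B e2 e2 = B e1 e1" using i1 expand[OF sb, of "(1,1)" "(1,1)"] by simp
  have a2: "B e1 e1 + 3*B e1 e2 + 2*B e2 e2 = B e1 e2" using i2 expand[OF sb, of "(1,1)" "(1,2)"] by simp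
  have g11: "B e1 e1 = 2*q" and g22: "B e2 e2 = -2*q" using a1 a2 unfolding q_def by linarith+
  have Beq: "B = gram_form q"
  proof (intro ext)
    fix x y show "B x y = gram_form q x y"
      unfolding expand[OF sb, of x y] g11 g22 q_def[symmetric] gram_form_def by (simp add: algebra_simps)
  qed
  have q: "q \<noteq> 0"
  proof
    assume "q = 0"
    hence "\<And>u. extR B u u = 0" unfolding extR_def Beq gram_form_def by simp
    thus False using h unfolding even_hyperbolic_def signature_1_1_def by fastforce
  qed
  show "\<exists>q::int. q \<noteq> 0 \<and>
         B e1 e1 = 2*q \<and> B e1 e2 = q \<and> B e2 e1 = q \<and> B e2 e2 = -2*q \<and>
         (let u = (0::rat, 1 / of_int q);
              v = (1 / (5 * of_int q), -2 / (5 * of_int q))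
          in u \<in> dual B \<and> v \<in> dual B \<and>
             (\<forall>y \<in> dual B. \<exists>m n. inN (addQ y (addQ (smulQ m u) (smulQ n v)))) \<and>
             (\<forall>m n. inN (addQ (smulQ m u) (smulQ n v)) \<longleftrightarrow> q dvd m \<and> (5*q) dvd n)) \<and>
         (\<not> (\<exists>x. x \<noteq> (0,0) \<and> B x x = 0)) \<and>
         ((\<not> (\<exists>x. B x x = 2 \<or> B x x = -2)) \<longleftrightarrow> q \<noteq> 1 \<and> q \<noteq> -1) \<and>
         ((\<forall>y \<in> dual B. inN (addQ ((eta_mulQ ^^ 6) y) y)) \<longleftrightarrow> q \<in> {1, -1, 2, -2})"
    using q g11 g22 sym gprops[OF q] unfolding q_def[symmetric] Beq[symmetric] by blast
qed

end
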